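(* Let $G$ be a simple graph on $n$ vertices with $cM_2(G)\ge cM_2(H)$ for every simple graph $H$ on $n$ vertices, and let $X$ be as defined in the context. Then every $u\in X$ satisfies $d_{G[X]}(u)\ge |X|-2$.
   Context: All graphs are finite and simple; $d_G(u)$ is the degree of $u$ and $cM_2(G)=\sum_{uv\in E(G)}|d_G(u)^2-d_G(v)^2|$; $G[X]$ is the subgraph induced by $X$. The canonical mixed graph $F$ of $G$ has vertex set $V(G)$; for each edge $uv\in E(G)$: if $d_G(u)>d_G(v)$ then $F$ contains the arc $\overrightarrow{uv}$, and if $d_G(u)=d_G(v)$ then $F$ contains the undirected edge $uv$. $d^+_F(u)$ (resp. $d^-_F(u)$) is the number of arcs of $F$ with tail (resp. head) $u$. $X=\{u\in V(G): d^+_F(u)\ge d^-_F(u)\}$. *)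

theory Defs
  imports Main
begin

definition simple_graph :: "'a set \<Rightarrow> 'a set set \<Rightarrow> bool" where
  "simple_graph V E \<longleftrightarrow> finite V \<and>
     E \<subseteq> {e. \<exists>u v. e = {u, v} \<and> u \<noteq> v \<and> u \<in> V \<and> v \<in> V}"

definition deg :: "'a set set \<Rightarrow> 'a \<Rightarrow> nat" where
  "deg E u = card {v. {u, v} \<in> E}"

text \<open>cM_2(G) = sum over edges uv of |d(u)^2 - d(v)^2|; summing over ordered pairs
  counts each edge twice, hence the division by 2.\<close>
definition cM2 :: "'a set set \<Rightarrow> int" where
  "cM2 E = (\<Sum>p\<in>{(u, v). {u, v} \<in> E}.
              \<bar>int (deg E (fst p) ^ 2) - int (deg E (snd p) ^ 2)\<bar>) div 2"

definition arcs :: "'a set set \<Rightarrow> ('a \<times> 'a) set" where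
  "arcs E = {(u, v). {u, v} \<in> E \<and> deg E u > deg E v}"

definition out_deg :: "'a set set \<Rightarrow> 'a \<Rightarrow> nat" where
  "out_deg E u = card {v. (u, v) \<in> arcs E}"

definition in_deg :: "'a set set \<Rightarrow> 'a \<Rightarrow> nat" where
  "in_deg E u = card {v. (v, u) \<in> arcs E}"

definition Xset :: "'a set \<Rightarrow> 'a set set \<Rightarrow> 'a set" where
  "Xset V E = {u \<in> V. out_deg E u \<ge> in_deg E u}"

definition induced_deg :: "'a set set \<Rightarrow> 'a set \<Rightarrow> 'a \<Rightarrow> nat" where
  "induced_deg E S u = card {v \<in> S. {u, v} \<in> E}"

end

theory Submission imports Defs begin

definition NB :: "'a set set \<Rightarrow> 'a \<Rightarrow> 'a set" where
  "NB E x = {y. {x,y} \<in> E}"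
definition PS :: "'a set set \<Rightarrow> ('a \<times> 'a) set" where
  "PS E = {(u, v). {u, v} \<in> E}"
definition hh :: "'a set set \<Rightarrow> 'a \<Rightarrow> 'a \<Rightarrow> int" where
  "hh E x y = \<bar>int (deg E x ^ 2) - int (deg E y ^ 2)\<bar>"
definition fsum :: "'a set set \<Rightarrow> int" where
  "fsum E = (\<Sum>p\<in>PS E. hh E (fst p) (snd p))"
definition sg :: "nat \<Rightarrow> nat \<Rightarrow> int" where
  "sg a b = (if b \<le> a then 1 else -1)"
definition tt :: "'a set set \<Rightarrow> 'a \<Rightarrow> int" where
  "tt E x = (\<Sum>y\<in>NB E x. sg (deg E x) (deg E y))"

lemma cM2_fsum: "cM2 E = fsum E div 2"
  unfolding cM2_def fsum_def PS_def hh_def by simp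

lemma deg_NB: "deg E x = card (NB E x)"
  unfolding deg_def NB_def by simp

lemma sg_edge:
  assumes "simple_graph V E" "{x,y} \<in> E"
  shows "x \<in> V \<and> y \<in> V \<and> x \<noteq> y"
proof -
  obtain a b where "{x,y} = {a,b}" "a \<noteq> b" "a \<in> V" "b \<in> V"
    using assms unfolding simple_graph_def by blast
  then show ?thesis by (auto simp: doubleton_eq_iff)
qed

lemma NB_sub: "simple_graph V E \<Longrightarrow> NB E x \<subseteq> V"
proof
  fix y assume "simple_graph V E" "y \<in> NB E x"
  then show "y \<in> V" using sg_edge[of V E x y] unfolding NB_def by simp
qed

lemma NB_fin: "simple_graph V E \<Longrightarrow> finite (NB E x)"
proof -
  assume a: "simple_graph V E"
  then have "finite V" unfolding simple_graph_def by simp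
  then show ?thesis using finite_subset[OF NB_sub[OF a]] by simp
qed

lemma NB_irr: "simple_graph V E \<Longrightarrow> x \<notin> NB E x"
  unfolding NB_def using sg_edge[of V E x x] by blast

lemma PS_Sigma: "simple_graph V E \<Longrightarrow> PS E = Sigma V (NB E)"
proof -
  assume a: "simple_graph V E"
  show ?thesis
  proof (rule set_eqI)
    fix p :: "'a \<times> 'a"
    obtain x y where p: "p = (x,y)" by (cases p)
    show "p \<in> PS E \<longleftrightarrow> p \<in> Sigma V (NB E)"
      unfolding p PS_def NB_def using sg_edge[OF a, of x y] by blast
  qed
qed

lemma PS_fin: "simple_graph V E \<Longrightarrow> finite (PS E)"
proof -
  assume a: "simple_graph V E"
  then have "finite V" unfolding simple_graph_def by simp
  then show ?thesis unfolding PS_Sigma[OF a] using NB_fin[OF a] by simp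
qed

lemma gen1: "(X::int) = Y + c \<Longrightarrow> Z \<le> Y \<Longrightarrow> 0 \<le> c \<Longrightarrow> \<bar>X - Z\<bar> - \<bar>Y - Z\<bar> = c" by (auto simp: abs_if)
lemma gen2: "(X::int) = Y + c \<Longrightarrow> X \<le> Z \<Longrightarrow> 0 \<le> c \<Longrightarrow> \<bar>X - Z\<bar> - \<bar>Y - Z\<bar> = -c" by (auto simp: abs_if)

lemma arith1:
  fixes a b :: nat
  shows "\<bar>int ((a+1)^2) - int (b^2)\<bar> - \<bar>int (a^2) - int (b^2)\<bar> = (2*int a+1) * sg a b"
proof -
  have q: "int ((a+1)^2) = int (a^2) + (2*int a + 1)" by (simp add: power2_eq_square algebra_simps)
  show ?thesis
  proof (cases "b \<le> a")
    case True
    then have "int (b^2) \<le> int (a^2)" by (simp add: power_mono)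
    from gen1[OF q this] have "\<bar>int ((a+1)^2) - int (b^2)\<bar> - \<bar>int (a^2) - int (b^2)\<bar> = 2*int a+1" by simp
    then show ?thesis using True by (simp add: sg_def)
  next
    case False
    then have "(a+1)^2 \<le> b^2" by (simp add: power_mono)
    then have "int ((a+1)^2) \<le> int (b^2)" by linarith
    from gen2[OF q this] have "\<bar>int ((a+1)^2) - int (b^2)\<bar> - \<bar>int (a^2) - int (b^2)\<bar> = -(2*int a+1)" by simp
    then show ?thesis using False by (simp add: sg_def)
  qed
qed

lemma t_nonneg:
  assumes "simple_graph V E" "x \<in> Xset V E"
  shows "tt E x \<ge> 0"
proof -
  let ?N = "NB E x"
  let ?P = "\<lambda>y. deg E y \<le> deg E x"
  have "tt E x = (\<Sum>y\<in>?N \<inter> {y. ?P y}. 1) + (\<Sum>y\<in>?N \<inter> - {y. ?P y}. -1)"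
    unfolding tt_def sg_def by (rule sum.If_cases) (rule NB_fin[OF assms(1)])
  also have "\<dots> = int (card (?N \<inter> {y. ?P y})) - int (card (?N \<inter> - {y. ?P y}))"
    by simp
  finally have t: "tt E x = int (card (?N \<inter> {y. ?P y})) - int (card (?N \<inter> - {y. ?P y}))" .
  have "out_deg E x \<le> card (?N \<inter> {y. ?P y})"
    unfolding out_deg_def arcs_def
    by (rule card_mono) (use NB_fin[OF assms(1), of x] in \<open>auto simp: NB_def\<close>)
  moreover have "in_deg E x = card (?N \<inter> - {y. ?P y})"
    unfolding in_deg_def arcs_def NB_def by (rule arg_cong[where f=card]) (auto simp: insert_commute)
  moreover have "out_deg E x \<ge> in_deg E x" using assms(2) unfolding Xset_def by auto
  ultimately show ?thesis using t by linarith
qed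

lemma add_edge:
  assumes G: "simple_graph V E" and pV: "p \<in> V" and qV: "q \<in> V" and pq: "p \<noteq> q"
    and ne: "{p,q} \<notin> E"
  shows "fsum (insert {p,q} E) = fsum E + 2*((2*int (deg E p)+1)*tt E p + (2*int (deg E q)+1)*tt E q
           + \<bar>int ((deg E p+1)^2) - int ((deg E q+1)^2)\<bar>)"
proof -
  define E' where "E' = insert {p,q} E"
  have NB1: "NB E' x = NB E x \<union> (if x=p then {q} else {}) \<union> (if x=q then {p} else {})" for x
    unfolding NB_def E'_def using pq by (auto simp: doubleton_eq_iff)
  have qn: "q \<notin> NB E p" using ne unfolding NB_def by simp
  have pn: "p \<notin> NB E q" using ne unfolding NB_def by (simp add: insert_commute)
  have dp: "deg E' p = deg E p + 1"
    unfolding deg_NB NB1 using pq qn NB_fin[OF G, of p] by simp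
  have dq: "deg E' q = deg E q + 1"
    unfolding deg_NB NB1 using pq pn NB_fin[OF G, of q] by simp
  have dx: "deg E' x = deg E x" if "x \<noteq> p" "x \<noteq> q" for x
    unfolding deg_NB NB1 using that by simp
  have PS1: "PS E' = insert (p,q) (insert (q,p) (PS E))"
    unfolding PS_def E'_def by (auto simp: doubleton_eq_iff)
  have n1: "(p,q) \<notin> PS E" "(q,p) \<notin> PS E" using ne unfolding PS_def by (auto simp: insert_commute)
  have fin: "finite (PS E)" using PS_fin[OF G] .
  have hpq: "hh E' p q = \<bar>int ((deg E p+1)^2) - int ((deg E q+1)^2)\<bar>"
    unfolding hh_def dp dq by simp
  have hqp: "hh E' q p = \<bar>int ((deg E p+1)^2) - int ((deg E q+1)^2)\<bar>"
    unfolding hh_def dp dq by (simp add: abs_minus_commute)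
  have "fsum E' = hh E' p q + (hh E' q p + (\<Sum>z\<in>PS E. hh E' (fst z) (snd z)))"
    unfolding fsum_def PS1 using n1 fin pq by simp
  define a where "a x y = (if x = p \<or> x = q then hh E' x y - hh E x y else 0)" for x y
  have hsplit: "hh E' (fst z) (snd z) = hh E (fst z) (snd z) + a (fst z) (snd z) + a (snd z) (fst z)"
    if "z \<in> PS E" for z
  proof -
    obtain x y where z: "z = (x,y)" by (cases z)
    have e: "{x,y} \<in> E" using that z unfolding PS_def by simp
    then have xy: "x \<noteq> y" using sg_edge[OF G e] by simp
    have nb: "\<not> (x \<in> {p,q} \<and> y \<in> {p,q})" using e ne xy by (auto simp: insert_commute)
    show ?thesis
    proof (cases "x = p \<or> x = q")
      case True
      then show ?thesis using nb unfolding z a_def by auto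
    next
      case False
      show ?thesis
      proof (cases "y = p \<or> y = q")
        case True
        then show ?thesis using False unfolding z a_def by (auto simp: hh_def abs_minus_commute)
      next
        case F2: False
        then show ?thesis using False unfolding z a_def hh_def by (simp add: dx)
      qed
    qed
  qed
  have s1: "(\<Sum>z\<in>PS E. hh E' (fst z) (snd z)) = fsum E + (\<Sum>z\<in>PS E. a (fst z) (snd z))
              + (\<Sum>z\<in>PS E. a (snd z) (fst z))"
    unfolding fsum_def by (simp add: hsplit sum.distrib cong: sum.cong)
  have s2: "(\<Sum>z\<in>PS E. a (snd z) (fst z)) = (\<Sum>z\<in>PS E. a (fst z) (snd z))"
    by (rule sum.reindex_bij_witness[of _ prod.swap prod.swap])
       (auto simp: PS_def insert_commute)
  have "(\<Sum>z\<in>PS E. a (fst z) (snd z)) = (\<Sum>x\<in>V. \<Sum>y\<in>NB E x. a x y)"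
    unfolding PS_Sigma[OF G]
    using sum.Sigma[of V "NB E" "\<lambda>x y. a x y"] G[unfolded simple_graph_def] NB_fin[OF G] by (simp add: split_beta)
  also have "\<dots> = (\<Sum>x\<in>{p,q}. \<Sum>y\<in>NB E x. a x y)"
    by (rule sum.mono_neutral_right) (use G pV qV in \<open>auto simp: simple_graph_def a_def\<close>)
  also have "\<dots> = (\<Sum>y\<in>NB E p. a p y) + (\<Sum>y\<in>NB E q. a q y)"
    using pq by simp
  also have "(\<Sum>y\<in>NB E p. a p y) = (2*int (deg E p)+1)*tt E p"
  proof -
    have "(\<Sum>y\<in>NB E p. a p y) = (\<Sum>y\<in>NB E p. (2*int (deg E p)+1) * sg (deg E p) (deg E y))"
    proof (rule sum.cong)
      fix y assume y: "y \<in> NB E p"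
      then have "y \<noteq> p" "y \<noteq> q" using NB_irr[OF G, of p] qn by auto
      then show "a p y = (2*int (deg E p)+1) * sg (deg E p) (deg E y)"
        unfolding a_def hh_def using dp dx arith1 by simp
    qed simp
    then show ?thesis unfolding tt_def by (simp add: sum_distrib_left)
  qed
  also have "(\<Sum>y\<in>NB E q. a q y) = (2*int (deg E q)+1)*tt E q"
  proof -
    have "(\<Sum>y\<in>NB E q. a q y) = (\<Sum>y\<in>NB E q. (2*int (deg E q)+1) * sg (deg E q) (deg E y))"
    proof (rule sum.cong)
      fix y assume y: "y \<in> NB E q"
      then have "y \<noteq> p" "y \<noteq> q" using NB_irr[OF G, of q] pn by auto
      then show "a q y = (2*int (deg E q)+1) * sg (deg E q) (deg E y)"
        unfolding a_def hh_def using dq dx arith1 pq by simp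
    qed simp
    then show ?thesis unfolding tt_def by (simp add: sum_distrib_left)
  qed
  finally have s3: "(\<Sum>z\<in>PS E. a (fst z) (snd z)) = (2*int (deg E p)+1)*tt E p + (2*int (deg E q)+1)*tt E q" .
  show ?thesis
    using \<open>fsum E' = _\<close> s1 s2 s3 hpq hqp unfolding E'_def[symmetric] by simp
qed

lemma NB_ins: "p \<noteq> q \<Longrightarrow> NB (insert {p,q} E) x = NB E x \<union> (if x=p then {q} else {}) \<union> (if x=q then {p} else {})"
  unfolding NB_def by (auto simp: doubleton_eq_iff)

lemma deg_ins:
  assumes G: "simple_graph V E" and pq: "p \<noteq> q" and ne: "{p,q} \<notin> E"
  shows "deg (insert {p,q} E) x = deg E x + (if x = p \<or> x = q then 1 else 0)"
proof -
  have qn: "q \<notin> NB E p" using ne unfolding NB_def by simp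
  have pn: "p \<notin> NB E q" using ne unfolding NB_def by (simp add: insert_commute)
  show ?thesis
    unfolding deg_NB NB_ins[OF pq] using pq qn pn NB_fin[OF G, of p] NB_fin[OF G, of q] by auto
qed

lemma simple_ins:
  assumes G: "simple_graph V E" and "p \<in> V" "q \<in> V" "p \<noteq> q"
  shows "simple_graph V (insert {p,q} E)"
  using assms unfolding simple_graph_def by blast

lemma tU:
  assumes G: "simple_graph V E" and uv: "u \<noteq> v" and ne: "{u,v} \<notin> E" and d: "deg E v = deg E u"
  shows "tt (insert {u,v} E) u \<ge> tt E u + 1"
proof -
  let ?E' = "insert {u,v} E"
  have N: "NB ?E' u = insert v (NB E u)" using NB_ins[OF uv, of E u] uv by auto
  have vn: "v \<notin> NB E u" using ne unfolding NB_def by simp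
  have du: "deg ?E' u = deg E u + 1" using deg_ins[OF G uv ne, of u] by simp
  have dv: "deg ?E' v = deg E u + 1" using deg_ins[OF G uv ne, of v] d by simp
  have a1: "tt ?E' u = sg (deg E u + 1) (deg E u + 1) + (\<Sum>y\<in>NB E u. sg (deg E u + 1) (deg ?E' y))"
    unfolding tt_def N du using vn NB_fin[OF G, of u] dv by simp
  have a2: "(\<Sum>y\<in>NB E u. sg (deg E u + 1) (deg ?E' y)) = (\<Sum>y\<in>NB E u. sg (deg E u + 1) (deg E y))"
  proof (rule sum.cong)
    fix y assume "y \<in> NB E u"
    then have "y \<noteq> u" "y \<noteq> v" using NB_irr[OF G, of u] vn by auto
    then show "sg (deg E u + 1) (deg ?E' y) = sg (deg E u + 1) (deg E y)"
      using deg_ins[OF G uv ne, of y] by simp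
  qed simp
  have a3: "(\<Sum>y\<in>NB E u. sg (deg E u + 1) (deg E y)) \<ge> tt E u"
    unfolding tt_def by (rule sum_mono) (simp add: sg_def)
  have a4: "sg (deg E u + 1) (deg E u + 1) = 1" by (simp add: sg_def)
  show ?thesis using a1 a2 a3 a4 by linarith
qed

lemma tW:
  assumes G: "simple_graph V E" and uv: "u \<noteq> v" and ne: "{u,v} \<notin> E"
    and wu: "w \<noteq> u" and wv: "w \<noteq> v" and ne2: "{u,w} \<notin> E"
  shows "tt (insert {u,v} E) w \<ge> tt E w - 2"
proof -
  let ?E' = "insert {u,v} E"
  have N: "NB ?E' w = NB E w" using NB_ins[OF uv, of E w] wu wv by auto
  have dw: "deg ?E' w = deg E w" using deg_ins[OF G uv ne, of w] wu wv by simp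
  have un: "u \<notin> NB E w" using ne2 unfolding NB_def by (simp add: insert_commute)
  have "(\<Sum>y\<in>NB E w. sg (deg E w) (deg ?E' y) - sg (deg E w) (deg E y))
        \<ge> (\<Sum>y\<in>NB E w. (if y = v then -2 else 0))"
  proof (rule sum_mono)
    fix y assume y: "y \<in> NB E w"
    show "(if y = v then -2 else 0) \<le> sg (deg E w) (deg ?E' y) - sg (deg E w) (deg E y)"
    proof (cases "y = v")
      case True then show ?thesis by (simp add: sg_def)
    next
      case False
      then have "y \<noteq> u" using y un by auto
      then show ?thesis using False deg_ins[OF G uv ne, of y] by simp
    qed
  qed
  moreover have "(\<Sum>y\<in>NB E w. (if y = v then -2 else 0)) \<ge> (-2::int)"
    using NB_fin[OF G, of w] by (simp add: sum.delta)
  ultimately have "(\<Sum>y\<in>NB E w. sg (deg E w) (deg ?E' y)) - tt E w \<ge> -2"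
    unfolding tt_def by (simp add: sum_subtractf)
  then show ?thesis unfolding tt_def N dw by simp
qed

lemma cM2_step: "fsum E2 = fsum E1 + 2*D \<Longrightarrow> cM2 E2 = cM2 E1 + D"
  unfolding cM2_fsum by simp

lemma sq_inj: "((a::nat)+1)^2 = (b+1)^2 \<Longrightarrow> a = b"
proof (rule ccontr)
  assume h: "(a+1)^2 = (b+1)^2" "a \<noteq> b"
  then consider "a < b" | "b < a" by linarith
  then show False
  proof cases
    case 1 then have "(a+1)^2 < (b+1)^2" by (simp add: power_strict_mono)
    then show False using h by simp
  next
    case 2 then have "(b+1)^2 < (a+1)^2" by (simp add: power_strict_mono)
    then show False using h by simp
  qed
qed

lemma step1:
  fixes V :: "'a set" and E :: "'a set set"
  assumes G: "simple_graph V E"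
    and max: "\<forall>(V' :: 'a set) E'. simple_graph V' E' \<and> card V' = card V \<longrightarrow> cM2 E' \<le> cM2 E"
    and uV: "u \<in> V" and vV: "v \<in> V" and uv: "u \<noteq> v" and ne: "{u,v} \<notin> E"
    and tu: "tt E u \<ge> 0" and tv: "tt E v \<ge> 0"
  shows "deg E v = deg E u"
proof -
  let ?D = "(2*int (deg E u)+1)*tt E u + (2*int (deg E v)+1)*tt E v
           + \<bar>int ((deg E u+1)^2) - int ((deg E v+1)^2)\<bar>"
  have "cM2 (insert {u,v} E) = cM2 E + ?D"
    by (rule cM2_step) (rule add_edge[OF G uV vV uv ne])
  moreover have "cM2 (insert {u,v} E) \<le> cM2 E"
    using max simple_ins[OF G uV vV uv] by auto
  ultimately have "?D \<le> 0" by simp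
  moreover have "(2*int (deg E u)+1)*tt E u \<ge> 0" using tu by simp
  moreover have "(2*int (deg E v)+1)*tt E v \<ge> 0" using tv by simp
  ultimately have "int ((deg E u+1)^2) = int ((deg E v+1)^2)" by linarith
  then have "(deg E u+1)^2 = (deg E v+1)^2" by (simp only: of_nat_eq_iff)
  then show ?thesis using sq_inj by metis
qed

theorem corollary1:
  fixes V :: "'a set" and E :: "'a set set"
  assumes "simple_graph V E"
    and "\<forall>(V' :: 'a set) E'. simple_graph V' E' \<and> card V' = card V \<longrightarrow> cM2 E' \<le> cM2 E"
  shows "\<forall>u \<in> Xset V E. int (induced_deg E (Xset V E) u) \<ge> int (card (Xset V E)) - 2"
proof
  note G = assms(1) and max = assms(2)
  let ?X = "Xset V E"
  fix u assume uX: "u \<in> ?X"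
  have XV: "?X \<subseteq> V" unfolding Xset_def by auto
  have finV: "finite V" using G unfolding simple_graph_def by simp
  have finX: "finite ?X" using finite_subset[OF XV finV] .
  have uV: "u \<in> V" using uX XV by auto
  show "int (induced_deg E ?X u) \<ge> int (card ?X) - 2"
  proof (rule ccontr)
    assume "\<not> ?thesis"
    then have lt: "int (induced_deg E ?X u) + 2 < int (card ?X)" by simp
    define M where "M = (?X - {u}) - NB E u"
    have id: "induced_deg E ?X u = card (?X \<inter> NB E u)"
      unfolding induced_deg_def NB_def by (rule arg_cong[where f=card]) auto
    have un: "u \<notin> NB E u" using NB_irr[OF G] .
    have c1: "card ?X = card (?X - {u}) + 1" using uX finX
      by (metis card_Suc_Diff1 Suc_eq_plus1)
    have dec: "?X - {u} = (?X \<inter> NB E u) \<union> M" unfolding M_def using un by auto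
    have c2: "card (?X - {u}) = card (?X \<inter> NB E u) + card M"
      unfolding dec by (rule card_Un_disjoint) (use finX in \<open>auto simp: M_def\<close>)
    have cM: "card M \<ge> 2" using lt id c1 c2 by linarith
    then obtain v where vM: "v \<in> M" by (metis card.empty ex_in_conv not_numeral_le_zero)
    have finM: "finite M" using finX unfolding M_def by auto
    have "card (M - {v}) \<ge> 1" using cM vM finM by (simp add: card_Diff_singleton)
    then obtain w where wM: "w \<in> M - {v}" by (metis card.empty ex_in_conv not_one_le_zero)
    have vX: "v \<in> ?X" and wX: "w \<in> ?X" and uv: "u \<noteq> v" and uw: "u \<noteq> w" and vw: "w \<noteq> v"
      using vM wM unfolding M_def by auto
    have ne1: "{u,v} \<notin> E" and ne2: "{u,w} \<notin> E" using vM wM unfolding M_def NB_def by auto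
    have vV: "v \<in> V" and wV: "w \<in> V" using vX wX XV by auto
    have tu: "tt E u \<ge> 0" using t_nonneg[OF G uX] .
    have tv: "tt E v \<ge> 0" using t_nonneg[OF G vX] .
    have tw: "tt E w \<ge> 0" using t_nonneg[OF G wX] .
    have dv: "deg E v = deg E u" using step1[OF G max uV vV uv ne1 tu tv] .
    have dw: "deg E w = deg E u" using step1[OF G max uV wV uw ne2 tu tw] .
    define E1 where "E1 = insert {u,v} E"
    have G1: "simple_graph V E1" unfolding E1_def using simple_ins[OF G uV vV uv] .
    have ne3: "{u,w} \<notin> E1" unfolding E1_def using ne2 vw uw by (auto simp: doubleton_eq_iff)
    have d1u: "deg E1 u = deg E u + 1" unfolding E1_def using deg_ins[OF G uv ne1, of u] by simp
    have d1w: "deg E1 w = deg E u" unfolding E1_def using deg_ins[OF G uv ne1, of w] uw vw dw by auto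
    have t1u: "tt E1 u \<ge> 1" unfolding E1_def using tU[OF G uv ne1 dv] tu by linarith
    have t1w: "tt E1 w \<ge> -2" unfolding E1_def using tW[OF G uv ne1 uw[symmetric] vw ne2] tw by linarith
    let ?k = "int (deg E u)"
    let ?D = "(2*int (deg E1 u)+1)*tt E1 u + (2*int (deg E1 w)+1)*tt E1 w
           + \<bar>int ((deg E1 u+1)^2) - int ((deg E1 w+1)^2)\<bar>"
    have "cM2 (insert {u,w} E1) = cM2 E1 + ?D"
      by (rule cM2_step) (rule add_edge[OF G1 uV wV uw ne3])
    moreover have "cM2 (insert {u,w} E1) \<le> cM2 E"
      using max simple_ins[OF G1 uV wV uw] by auto
    moreover have "cM2 E1 \<ge> cM2 E"
    proof -
      have "cM2 E1 = cM2 E + ((2*int (deg E u)+1)*tt E u + (2*int (deg E v)+1)*tt E v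
           + \<bar>int ((deg E u+1)^2) - int ((deg E v+1)^2)\<bar>)"
        unfolding E1_def by (rule cM2_step) (rule add_edge[OF G uV vV uv ne1])
      moreover have "(2*int (deg E u)+1)*tt E u \<ge> 0" using tu by simp
      moreover have "(2*int (deg E v)+1)*tt E v \<ge> 0" using tv by simp
      ultimately show ?thesis by linarith
    qed
    ultimately have D0: "?D \<le> 0" by linarith
    have c1: "2*int (deg E1 u)+1 = 2*?k+3" using d1u by simp
    have c2: "2*int (deg E1 w)+1 = 2*?k+1" using d1w by simp
    have e1: "(2*int (deg E1 u)+1)*tt E1 u \<ge> 2*?k+3"
    proof -
      have "(2*?k+3)*1 \<le> (2*?k+3)*tt E1 u"
        by (rule mult_left_mono) (use t1u in auto)
      then show ?thesis by (simp only: c1 mult_1_right)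
    qed
    have e2: "(2*int (deg E1 w)+1)*tt E1 w \<ge> (2*?k+1)*(-2)"
    proof -
      have "(2*?k+1)*(-2) \<le> (2*?k+1)*tt E1 w"
        by (rule mult_left_mono) (use t1w in auto)
      then show ?thesis by (simp only: c2)
    qed
    have e3: "\<bar>int ((deg E1 u+1)^2) - int ((deg E1 w+1)^2)\<bar> = 2*?k+3"
      unfolding d1u d1w by (simp add: power2_eq_square algebra_simps)
    have e4: "(2*?k+1)*(-2) = -4*?k-2" by simp
    show False using D0 e1 e2 e3 e4 by linarith
  qed
qed

end
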